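(* Let $q:\mathbb{Z}^n\to\mathbb{Z}$ be a slender unit form admitting a maximal omnipresent root. Then $q$ is weakly non-negative.
   Context: A unit form is $q(x_1,\dots,x_n)=\sum_i x_i^2+\sum_{i<j}q_{ij}x_ix_j$ with $q_{ij}\in\mathbb{Z}$; its bilinear form is $q(x,y)=q(x+y)-q(x)-q(y)$, so $q(e_i,e_j)=q_{ij}$. $q$ is slender if $q(e_i,e_j)\ge -1$ for all $i\ne j$. A root of $q$ is $v\in\mathbb{Z}^n$ with non-negative coordinates and $q(v)=1$; omnipresent if all $v(i)>0$; maximal if every root $w\ge v$ (coordinatewise) equals $v$. $q$ is weakly non-negative if $q(v)\ge0$ for all $v\in\mathbb{N}^n$. *)

theory Defs
  imports Main
begin

text \<open>A unit form in n variables is encoded by n and the integer coefficients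
  Q i j for i < j < n (values of Q outside this range are ignored).
  Vectors of Z^n are functions nat => int, only coordinates i < n matter.\<close>

definition unit_form :: "nat \<Rightarrow> (nat \<Rightarrow> nat \<Rightarrow> int) \<Rightarrow> (nat \<Rightarrow> int) \<Rightarrow> int" where
  "unit_form n Q x = (\<Sum>i<n. (x i)^2) + (\<Sum>j<n. \<Sum>i<j. Q i j * x i * x j)"

definition bil_form :: "nat \<Rightarrow> (nat \<Rightarrow> nat \<Rightarrow> int) \<Rightarrow> (nat \<Rightarrow> int) \<Rightarrow> (nat \<Rightarrow> int) \<Rightarrow> int" where
  "bil_form n Q x y = unit_form n Q (\<lambda>i. x i + y i) - unit_form n Q x - unit_form n Q y"

definition unit_vec :: "nat \<Rightarrow> nat \<Rightarrow> int" where
  "unit_vec i = (\<lambda>k. if k = i then 1 else 0)"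

definition slender :: "nat \<Rightarrow> (nat \<Rightarrow> nat \<Rightarrow> int) \<Rightarrow> bool" where
  "slender n Q \<longleftrightarrow> (\<forall>i<n. \<forall>j<n. i \<noteq> j \<longrightarrow> bil_form n Q (unit_vec i) (unit_vec j) \<ge> -1)"

definition is_root :: "nat \<Rightarrow> (nat \<Rightarrow> nat \<Rightarrow> int) \<Rightarrow> (nat \<Rightarrow> int) \<Rightarrow> bool" where
  "is_root n Q v \<longleftrightarrow> (\<forall>i<n. v i \<ge> 0) \<and> unit_form n Q v = 1"

definition omnipresent :: "nat \<Rightarrow> (nat \<Rightarrow> int) \<Rightarrow> bool" where
  "omnipresent n v \<longleftrightarrow> (\<forall>i<n. v i > 0)"

definition maximal_root :: "nat \<Rightarrow> (nat \<Rightarrow> nat \<Rightarrow> int) \<Rightarrow> (nat \<Rightarrow> int) \<Rightarrow> bool" where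
  "maximal_root n Q v \<longleftrightarrow> is_root n Q v \<and>
     (\<forall>w. is_root n Q w \<and> (\<forall>i<n. v i \<le> w i) \<longrightarrow> (\<forall>i<n. w i = v i))"

definition weakly_nonneg :: "nat \<Rightarrow> (nat \<Rightarrow> nat \<Rightarrow> int) \<Rightarrow> bool" where
  "weakly_nonneg n Q \<longleftrightarrow> (\<forall>v. (\<forall>i<n. v i \<ge> 0) \<longrightarrow> unit_form n Q v \<ge> 0)"

end

theory Submission
  imports Defs
begin

definition AA :: "(nat \<Rightarrow> nat \<Rightarrow> int) \<Rightarrow> nat \<Rightarrow> nat \<Rightarrow> int" where
  "AA Q i j = (if i = j then 2 else if i < j then Q i j else Q j i)"

definition Bm :: "nat \<Rightarrow> (nat \<Rightarrow> nat \<Rightarrow> int) \<Rightarrow> (nat \<Rightarrow> int) \<Rightarrow> (nat \<Rightarrow> int) \<Rightarrow> int" where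
  "Bm n Q x y = (\<Sum>i<n. \<Sum>j<n. x i * AA Q i j * y j)"

lemma AA_sym: "AA Q i j = AA Q j i"
  by (auto simp: AA_def)

lemma Bm_sym: "Bm n Q x y = Bm n Q y x"
  unfolding Bm_def
  apply (subst sum.swap)
  apply (intro sum.cong refl)
  by (simp add: AA_sym[of Q] mult.commute mult.left_commute)

lemma Bm_add1: "Bm n Q (\<lambda>i. x i + z i) y = Bm n Q x y + Bm n Q z y"
  unfolding Bm_def by (simp add: algebra_simps sum.distrib)

lemma Bm_add2: "Bm n Q y (\<lambda>i. x i + z i) = Bm n Q y x + Bm n Q y z"
  using Bm_add1 Bm_sym by metis

lemma Bm_smult1: "Bm n Q (\<lambda>i. c * x i) y = c * Bm n Q x y"
  unfolding Bm_def by (simp add: sum_distrib_left algebra_simps)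

lemma Bm_smult2: "Bm n Q y (\<lambda>i. c * x i) = c * Bm n Q y x"
  using Bm_smult1 Bm_sym by metis

lemma Bm_unit1: "i < n \<Longrightarrow> Bm n Q (unit_vec i) y = (\<Sum>j<n. AA Q i j * y j)"
proof -
  assume i: "i < n"
  have "Bm n Q (unit_vec i) y = (\<Sum>k<n. if k = i then (\<Sum>j<n. AA Q k j * y j) else 0)"
    unfolding Bm_def unit_vec_def by (intro sum.cong refl) auto
  also have "\<dots> = (\<Sum>j<n. AA Q i j * y j)" using i by (simp add: sum.delta)
  finally show ?thesis .
qed

lemma Bm_unit_unit: "i < n \<Longrightarrow> j < n \<Longrightarrow> Bm n Q (unit_vec i) (unit_vec j) = AA Q i j"
proof -
  assume "i < n" "j < n"
  then have "Bm n Q (unit_vec i) (unit_vec j) = (\<Sum>k<n. if k = j then AA Q i k else 0)"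
  proof -
    have "Bm n Q (unit_vec i) (unit_vec j) = (\<Sum>k<n. AA Q i k * unit_vec j k)"
      by (rule Bm_unit1) fact
    also have "\<dots> = (\<Sum>k<n. if k = j then AA Q i k else 0)"
      by (rule sum.cong) (auto simp: unit_vec_def)
    finally show ?thesis .
  qed
  also have "\<dots> = AA Q i j" using \<open>j < n\<close> by (simp add: sum.delta)
  finally show ?thesis .
qed

lemma tri_sum: "(\<Sum>i<n. \<Sum>j<n. f i j) = (\<Sum>i<n. f i i) + (\<Sum>j<n. \<Sum>i<j. f i j + f j i)"
  for f :: "nat \<Rightarrow> nat \<Rightarrow> int"
proof (induction n)
  case 0 then show ?case by simp
next
  case (Suc n)
  have "(\<Sum>i<Suc n. \<Sum>j<Suc n. f i j) = (\<Sum>i<n. \<Sum>j<n. f i j) + (\<Sum>i<n. f i n) + (\<Sum>j<n. f n j) + f n n"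
    by (simp add: sum.distrib)
  also have "\<dots> = (\<Sum>i<Suc n. f i i) + (\<Sum>j<Suc n. \<Sum>i<j. f i j + f j i)"
    using Suc by (simp add: sum.distrib)
  finally show ?case .
qed

lemma Bm_diag: "Bm n Q x x = 2 * unit_form n Q x"
proof -
  have "Bm n Q x x = (\<Sum>i<n. x i * AA Q i i * x i) + (\<Sum>j<n. \<Sum>i<j. x i * AA Q i j * x j + x j * AA Q j i * x i)"
    unfolding Bm_def by (rule tri_sum)
  also have "\<dots> = (\<Sum>i<n. 2 * (x i)^2) + (\<Sum>j<n. \<Sum>i<j. 2 * (Q i j * x i * x j))"
    by (intro arg_cong2[where f="(+)"] sum.cong refl) (auto simp: AA_def power2_eq_square)
  also have "\<dots> = 2 * unit_form n Q x"
    by (simp add: unit_form_def sum_distrib_left algebra_simps)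
  finally show ?thesis .
qed

lemma uf_add: "unit_form n Q (\<lambda>i. x i + y i) = unit_form n Q x + unit_form n Q y + Bm n Q x y"
proof -
  have "2 * unit_form n Q (\<lambda>i. x i + y i) = Bm n Q x x + Bm n Q y y + 2 * Bm n Q x y"
    unfolding Bm_diag[symmetric] Bm_add1 Bm_add2 using Bm_sym[of n Q x y] by simp
  then show ?thesis by (simp add: Bm_diag)
qed

lemma uf_smult: "unit_form n Q (\<lambda>i. c * x i) = c^2 * unit_form n Q x"
proof -
  have "2 * unit_form n Q (\<lambda>i. c * x i) = c^2 * (2 * unit_form n Q x)"
    unfolding Bm_diag[symmetric] Bm_smult1 Bm_smult2 by (simp add: power2_eq_square)
  then show ?thesis by simp
qed

lemma uf_unit: "i < n \<Longrightarrow> unit_form n Q (unit_vec i) = 1"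
  using Bm_unit_unit[of i n i Q] Bm_diag[of n Q "unit_vec i"] by (simp add: AA_def)

lemma slender_AA: "slender n Q \<Longrightarrow> i < n \<Longrightarrow> j < n \<Longrightarrow> AA Q i j \<ge> -1"
proof (cases "i = j")
  case True then show ?thesis by (simp add: AA_def)
next
  case False
  assume "slender n Q" "i < n" "j < n"
  then have "bil_form n Q (unit_vec i) (unit_vec j) \<ge> -1" using False by (simp add: slender_def)
  moreover have "bil_form n Q (unit_vec i) (unit_vec j) = AA Q i j"
    unfolding bil_form_def uf_add using Bm_unit_unit \<open>i<n\<close> \<open>j<n\<close> by simp
  ultimately show ?thesis by simp
qed


lemma uf_cong: "(\<forall>i<n. x i = x' i) \<Longrightarrow> unit_form n Q x = unit_form n Q x'"
  unfolding unit_form_def by (intro arg_cong2[where f="(+)"] sum.cong refl) auto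

lemma Bm_cong: "(\<forall>i<n. x i = x' i) \<Longrightarrow> (\<forall>i<n. y i = y' i) \<Longrightarrow> Bm n Q x y = Bm n Q x' y'"
  unfolding Bm_def by (intro sum.cong refl) auto

lemma uf_zero: "unit_form n Q (\<lambda>_. 0) = 0"
  by (simp add: unit_form_def)

lemma Bm_zero1: "Bm n Q (\<lambda>_. 0) y = 0"
  by (simp add: Bm_def)

lemma Bm_unit2: "i < n \<Longrightarrow> Bm n Q y (unit_vec i) = (\<Sum>j<n. AA Q i j * y j)"
  using Bm_unit1 Bm_sym by metis

lemma Bm_rows: "Bm n Q y y = (\<Sum>i<n. y i * Bm n Q y (unit_vec i))"
proof -
  have "Bm n Q y y = (\<Sum>i<n. y i * (\<Sum>j<n. AA Q i j * y j))"
    unfolding Bm_def by (simp add: sum_distrib_left mult.assoc)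
  also have "\<dots> = (\<Sum>i<n. y i * Bm n Q y (unit_vec i))"
    by (intro sum.cong refl) (simp add: Bm_unit2)
  finally show ?thesis .
qed

lemma Bm_lower:
  assumes sl: "slender n Q" and nn: "\<forall>i<n. 0 \<le> z i"
  shows "Bm n Q z z \<ge> 3 * (\<Sum>i<n. z i) - (\<Sum>i<n. z i)^2"
proof -
  have "(\<Sum>i<n. \<Sum>j<n. z i * ((if i = j then 3 else 0) - 1) * z j) \<le> Bm n Q z z"
    unfolding Bm_def
  proof (intro sum_mono)
    fix i j assume i: "i \<in> {..<n}" and j: "j \<in> {..<n}"
    have "(if i = j then 3 else 0) - 1 \<le> AA Q i j"
      using slender_AA[OF sl, of i j] i j by (auto simp: AA_def)
    moreover have "0 \<le> z i * z j" using nn i j by simp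
    ultimately have "z i * z j * ((if i = j then 3 else 0) - 1) \<le> z i * z j * AA Q i j"
      by (rule mult_left_mono)
    then show "z i * ((if i = j then 3 else 0) - 1) * z j \<le> z i * AA Q i j * z j"
      by (simp add: algebra_simps)
  qed
  moreover have "(\<Sum>i<n. \<Sum>j<n. z i * ((if i = j then 3 else 0) - 1) * z j)
      = (\<Sum>i<n. \<Sum>j<n. (if i = j then 3 * (z i * z i) else 0)) - (\<Sum>i<n. \<Sum>j<n. z i * z j)"
  proof -
    have "(\<Sum>i<n. \<Sum>j<n. z i * ((if i = j then 3 else 0) - 1) * z j)
      = (\<Sum>i<n. \<Sum>j<n. (if i = j then 3 * (z i * z i) else 0) - z i * z j)"
      by (intro sum.cong refl) (auto simp: algebra_simps)
    then show ?thesis by (simp add: sum_subtractf)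
  qed
  moreover have "(\<Sum>i<n. \<Sum>j<n. (if i = j then 3 * (z i * z i) else 0)) = (\<Sum>i<n. 3 * (z i * z i))"
    by (intro sum.cong refl) (simp add: sum.delta)
  moreover have "(\<Sum>i<n. \<Sum>j<n. z i * z j) = (\<Sum>i<n. z i)^2"
    by (simp add: power2_eq_square sum_product)
  moreover have "(\<Sum>i<n. z i) \<le> (\<Sum>i<n. z i * z i)"
  proof (intro sum_mono)
    fix i assume "i \<in> {..<n}"
    then have "0 \<le> z i" using nn by simp
    then show "z i \<le> z i * z i" by (cases "z i = 0") (auto intro: mult_le_cancel_left1[THEN iffD2] simp: mult_le_cancel_left1)
  qed
  ultimately show ?thesis by (simp add: sum_distrib_left[symmetric])
qed

lemma Bm_lower2:
  assumes sl: "slender n Q" and nn: "\<forall>i<n. 0 \<le> p i" "\<forall>i<n. 0 \<le> r i"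
  shows "Bm n Q p r \<ge> - ((\<Sum>i<n. p i) * (\<Sum>i<n. r i))"
proof -
  have "(\<Sum>i<n. \<Sum>j<n. p i * (-1) * r j) \<le> Bm n Q p r"
    unfolding Bm_def
  proof (intro sum_mono)
    fix i j assume i: "i \<in> {..<n}" and j: "j \<in> {..<n}"
    have "-1 \<le> AA Q i j" using slender_AA[OF sl, of i j] i j by auto
    moreover have "0 \<le> p i * r j" using nn i j by simp
    ultimately have "p i * r j * (-1) \<le> p i * r j * AA Q i j"
      by (rule mult_left_mono)
    then show "p i * (-1) * r j \<le> p i * AA Q i j * r j"
      by (simp add: algebra_simps)
  qed
  moreover have "(\<Sum>i<n. \<Sum>j<n. p i * (-1) * r j) = - ((\<Sum>i<n. p i) * (\<Sum>i<n. r i))"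
    by (simp add: sum_product sum_negf)
  ultimately show ?thesis by simp
qed


lemma struct_d:
  fixes v dd :: "nat \<Rightarrow> int"
  assumes vpos: "\<forall>i<n. v i \<ge> 1" and dnn: "\<forall>i<n. dd i \<ge> 0" and s2: "(\<Sum>i<n. v i * dd i) = 2"
  shows "\<exists>a<n. \<exists>b<n. (\<forall>i<n. i \<noteq> a \<and> i \<noteq> b \<longrightarrow> dd i = 0) \<and>
           ((a = b \<and> dd a \<le> 2) \<or> (a \<noteq> b \<and> dd a = 1 \<and> dd b = 1))"
proof -
  define f where "f i = v i * dd i" for i
  have fge: "dd i \<le> f i" if "i < n" for i
  proof -
    have "1 * dd i \<le> v i * dd i" using vpos dnn that by (intro mult_right_mono) auto
    then show ?thesis by (simp add: f_def)
  qed
  have fnn: "0 \<le> f i" if "i < n" for i using fge[OF that] dnn that by force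
  have fz: "dd i = 0" if "i < n" "f i = 0" for i using fge[OF that(1)] dnn that by force
  have fpos: "1 \<le> f i" if "i < n" "dd i \<noteq> 0" for i using fge[OF that(1)] dnn that by force
  have sf: "sum f {..<n} = 2" using s2 by (simp add: f_def)
  have "\<exists>a<n. dd a \<noteq> 0"
  proof (rule ccontr)
    assume "\<not> ?thesis"
    then have "\<forall>i<n. dd i = 0" by auto
    then have "sum f {..<n} = 0" by (simp add: f_def)
    with sf show False by simp
  qed
  then obtain a where a: "a < n" "dd a \<noteq> 0" by blast
  have split1: "sum f {..<n} = f a + sum f ({..<n} - {a})"
    using a by (simp add: sum.remove)
  have R1nn: "0 \<le> sum f ({..<n} - {a})" using fnn by (intro sum_nonneg) auto
  have fa1: "1 \<le> f a" using fpos a by auto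
  show ?thesis
  proof (cases "f a = 2")
    case True
    then have "sum f ({..<n} - {a}) = 0" using split1 sf by simp
    then have "\<forall>i\<in>{..<n} - {a}. f i = 0"
      using sum_nonneg_eq_0_iff[of "{..<n} - {a}" f] fnn by auto
    then have "\<forall>i<n. i \<noteq> a \<longrightarrow> dd i = 0" using fz by auto
    moreover have "dd a \<le> 2" using fge[OF a(1)] True by simp
    ultimately show ?thesis using a by blast
  next
    case False
    then have fa: "f a = 1" using split1 sf R1nn fa1 by simp
    then have dda: "dd a = 1" using fge[OF a(1)] dnn a by force
    have R1: "sum f ({..<n} - {a}) = 1" using split1 sf fa by simp
    have "\<exists>b\<in>{..<n} - {a}. f b \<noteq> 0"
    proof (rule ccontr)
      assume "\<not> ?thesis"
      then have "\<forall>i\<in>{..<n} - {a}. f i = 0" by auto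
      then have "sum f ({..<n} - {a}) = 0" by simp
      with R1 show False by simp
    qed
    then obtain b where b: "b \<in> {..<n} - {a}" "f b \<noteq> 0" by blast
    have bn: "b < n" "b \<noteq> a" using b by auto
    have ddb0: "dd b \<noteq> 0" using b by (auto simp: f_def)
    have split2: "sum f ({..<n} - {a}) = f b + sum f ({..<n} - {a} - {b})"
      using b by (simp add: sum.remove)
    have R2nn: "0 \<le> sum f ({..<n} - {a} - {b})" using fnn by (intro sum_nonneg) auto
    have fb1: "1 \<le> f b" using fpos bn ddb0 by auto
    have fb: "f b = 1" and R2: "sum f ({..<n} - {a} - {b}) = 0" using split2 R1 R2nn fb1 by auto
    have ddb: "dd b = 1" using fge[OF bn(1)] dnn bn fb ddb0 by force
    have "\<forall>i\<in>{..<n} - {a} - {b}. f i = 0"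
      using sum_nonneg_eq_0_iff[of "{..<n} - {a} - {b}" f] fnn R2 by auto
    then have "\<forall>i<n. i \<noteq> a \<and> i \<noteq> b \<longrightarrow> dd i = 0" using fz by auto
    then show ?thesis using a(1) bn dda ddb by blast
  qed
qed


theorem theorem1p8:
  fixes n :: nat and Q :: "nat \<Rightarrow> nat \<Rightarrow> int"
  assumes "slender n Q"
    and "\<exists>v. maximal_root n Q v \<and> omnipresent n v"
  shows "weakly_nonneg n Q"
proof -
  note sl = assms(1)
  obtain v where mr: "maximal_root n Q v" and om: "omnipresent n v" using assms(2) by blast
  have vpos: "\<forall>i<n. v i \<ge> 1" using om by (auto simp: omnipresent_def)
  have qv: "unit_form n Q v = 1" using mr by (simp add: maximal_root_def is_root_def)
  have maxv: "\<forall>i<n. w i = v i"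
    if "\<forall>i<n. 0 \<le> w i" "unit_form n Q w = 1" "\<forall>i<n. v i \<le> w i" for w
    using mr that by (auto simp: maximal_root_def is_root_def)
  define dd where "dd i = (\<Sum>j<n. AA Q i j * v j)" for i
  have Bv: "Bm n Q z v = (\<Sum>i<n. z i * dd i)" for z
    unfolding Bm_def dd_def by (simp add: sum_distrib_left mult.assoc)
  have Bunitv: "Bm n Q (unit_vec i) v = dd i" if "i < n" for i
    using Bm_unit1[OF that] by (simp add: dd_def)
  have ddnn: "\<forall>i<n. dd i \<ge> 0"
  proof (intro allI impI, rule ccontr)
    fix i assume i: "i < n" "\<not> 0 \<le> dd i"
    define t where "t = - dd i"
    have t: "t > 0" using i by (simp add: t_def)
    define w where "w = (\<lambda>j. v j + t * unit_vec i j)"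
    have "unit_form n Q w = unit_form n Q v + t^2 * unit_form n Q (unit_vec i) + t * Bm n Q v (unit_vec i)"
      unfolding w_def uf_add uf_smult Bm_smult2 ..
    also have "\<dots> = 1" using qv uf_unit[OF i(1)] Bm_sym[of n Q v] Bunitv[OF i(1)]
      by (simp add: t_def power2_eq_square)
    finally have qw: "unit_form n Q w = 1" .
    have wge: "\<forall>j<n. v j \<le> w j" using t by (simp add: w_def unit_vec_def)
    have wnn: "\<forall>j<n. 0 \<le> w j" using wge vpos by force
    have "w i = v i" using maxv[OF wnn qw wge] i by simp
    then show False using t by (simp add: w_def unit_vec_def)
  qed
  have Bvv: "Bm n Q v v = 2" using Bm_diag[of n Q v] qv by simp
  have sumvd: "(\<Sum>i<n. v i * dd i) = 2" using Bv[of v] Bvv by simp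
  obtain a b where ab: "a < n" "b < n" and dz: "\<forall>i<n. i \<noteq> a \<and> i \<noteq> b \<longrightarrow> dd i = 0"
    and dab: "(a = b \<and> dd a \<le> 2) \<or> (a \<noteq> b \<and> dd a = 1 \<and> dd b = 1)"
    using struct_d[OF vpos ddnn sumvd] by blast
  define g where "g z = unit_form n Q z + Bm n Q z v" for z
  define S where "S z = (\<Sum>i<n. z i)" for z :: "nat \<Rightarrow> int"
  have gadd: "g (\<lambda>i. x i + y i) = g x + g y + Bm n Q x y" for x y
    unfolding g_def uf_add Bm_add1 by simp
  have Bvnn: "Bm n Q z v \<ge> 0" if "\<forall>i<n. 0 \<le> z i" for z
    unfolding Bv using that ddnn by (intro sum_nonneg) auto
  have Snn: "S z \<ge> 0" if "\<forall>i<n. 0 \<le> z i" for z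
    unfolding S_def using that by (intro sum_nonneg) auto
  have S0: "\<forall>i<n. z i = 0" if "\<forall>i<n. 0 \<le> z i" "S z = 0" for z
    using that sum_nonneg_eq_0_iff[of "{..<n}" z] by (auto simp: S_def)
  show ?thesis unfolding weakly_nonneg_def
  proof (intro allI impI, rule ccontr)
    fix x assume xnn: "\<forall>i<n. 0 \<le> x i" and xneg: "\<not> 0 \<le> unit_form n Q x"
    define P where "P z \<longleftrightarrow> (\<forall>i<n. 0 \<le> z i) \<and> S z > 0 \<and> g z \<le> 0" for z
    define N where "N = Bm n Q x v + 1"
    have N1: "N \<ge> 1" using Bvnn[OF xnn] by (simp add: N_def)
    have "P (\<lambda>i. N * x i)"
    proof -
      have nn: "\<forall>i<n. 0 \<le> N * x i" using xnn N1 by simp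
      have "S x \<noteq> 0"
      proof
        assume "S x = 0"
        then have "\<forall>i<n. x i = 0" using S0 xnn by blast
        then have "unit_form n Q x = unit_form n Q (\<lambda>_. 0)" by (intro uf_cong) auto
        with xneg show False by (simp add: uf_zero)
      qed
      then have "S x > 0" using Snn[OF xnn] by simp
      then have Sp: "S (\<lambda>i. N * x i) > 0" using N1 by (simp add: S_def sum_distrib_left[symmetric])
      have "g (\<lambda>i. N * x i) = N^2 * unit_form n Q x + N * Bm n Q x v"
        unfolding g_def uf_smult Bm_smult1 ..
      also have "\<dots> \<le> N^2 * (-1) + N * (N - 1)"
      proof -
        have "N^2 * unit_form n Q x \<le> N^2 * (-1)" using xneg by (intro mult_left_mono) auto
        moreover have "Bm n Q x v = N - 1" by (simp add: N_def)
        ultimately show ?thesis by simp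
      qed
      also have "\<dots> \<le> 0" using N1 by (simp add: power2_eq_square algebra_simps)
      finally show ?thesis using nn Sp by (simp add: P_def)
    qed
    then obtain y where Py: "P y" and ymin: "\<forall>z. P z \<longrightarrow> nat (S y) \<le> nat (S z)"
      using ex_has_least_nat[of P _ "\<lambda>z. nat (S z)"] by blast
    have ynn: "\<forall>i<n. 0 \<le> y i" and Sy: "S y > 0" and gy: "g y \<le> 0" using Py by (auto simp: P_def)
    have gmin: "g z \<ge> 1" if "\<forall>i<n. 0 \<le> z i" "S z > 0" "S z < S y" for z
    proof (rule ccontr)
      assume "\<not> ?thesis"
      then have "P z" using that by (simp add: P_def)
      then have "nat (S y) \<le> nat (S z)" using ymin by blast
      then show False using that by simp
    qed
    have m0: "Bm n Q y v \<ge> 0" using Bvnn[OF ynn] .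
    have gy0: "g y \<noteq> 0"
    proof
      assume g0: "g y = 0"
      have "unit_form n Q (\<lambda>i. v i + y i) = 1 + g y"
        unfolding uf_add g_def using qv Bm_sym[of n Q v y] by simp
      then have q1: "unit_form n Q (\<lambda>i. v i + y i) = 1" using g0 by simp
      have "\<forall>i<n. v i + y i = v i" by (rule maxv) (use ynn vpos q1 in auto)
      then have "\<forall>i<n. y i = 0" by simp
      then have "S y = 0" by (simp add: S_def)
      with Sy show False by simp
    qed
    define k where "k = - g y"
    have k1: "k \<ge> 1" using gy gy0 by (simp add: k_def)
    have Sy3: "S y \<ge> 3"
    proof (rule ccontr)
      assume "\<not> ?thesis"
      then have S2: "S y \<le> 2" by simp
      have "Bm n Q y y \<ge> 3 * S y - (S y)^2" using Bm_lower[OF sl ynn] by (simp add: S_def)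
      moreover have "3 * S y - (S y)^2 \<ge> 2"
      proof -
        have "0 \<le> (S y - 1) * (2 - S y)" using Sy S2 by (intro mult_nonneg_nonneg) auto
        then show ?thesis by (simp add: power2_eq_square algebra_simps)
      qed
      ultimately have "unit_form n Q y \<ge> 1" using Bm_diag[of n Q y] by simp
      then have "g y \<ge> 1" using m0 by (simp add: g_def)
      with gy show False by simp
    qed
    have Bee: "Bm n Q (unit_vec i) (unit_vec i) = 2" if "i < n" for i
      using Bm_unit_unit[OF that that] by (simp add: AA_def)
    have row: "Bm n Q y (unit_vec i) \<le> -k - dd i" if i: "i < n" "y i > 0" for i
    proof -
      define z where "z = (\<lambda>j. y j - unit_vec i j)"
      have yz: "y = (\<lambda>j. z j + unit_vec i j)" by (simp add: z_def)
      have znn: "\<forall>j<n. 0 \<le> z j" using ynn i by (auto simp: z_def unit_vec_def)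
      have "S z = S y - (\<Sum>j<n. unit_vec i j)" by (simp add: S_def z_def sum_subtractf)
      also have "(\<Sum>j<n. unit_vec i j) = 1" using i by (simp add: unit_vec_def)
      finally have Sz: "S z = S y - 1" .
      have gz: "g z \<ge> 1" using gmin[OF znn] Sz Sy3 by simp
      have e1: "g y = g z + g (unit_vec i) + Bm n Q z (unit_vec i)" by (subst yz, rule gadd)
      have e2: "Bm n Q y (unit_vec i) = Bm n Q z (unit_vec i) + Bm n Q (unit_vec i) (unit_vec i)"
        by (subst yz, rule Bm_add1)
      have e3: "g (unit_vec i) = 1 + dd i" using uf_unit[OF i(1)] Bunitv[OF i(1)] by (simp add: g_def)
      show ?thesis using e1 e2 e3 Bee[OF i(1)] gz by (simp add: k_def)
    qed
    have kS: "k * S y \<le> 2 * k + Bm n Q y v"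
    proof -
      have "Bm n Q y y = (\<Sum>i<n. y i * Bm n Q y (unit_vec i))" by (rule Bm_rows)
      also have "\<dots> \<le> (\<Sum>i<n. y i * (-k - dd i))"
      proof (intro sum_mono)
        fix i assume i: "i \<in> {..<n}"
        show "y i * Bm n Q y (unit_vec i) \<le> y i * (-k - dd i)"
        proof (cases "y i = 0")
          case True then show ?thesis by simp
        next
          case False
          then have "y i > 0" using ynn i by force
          then show ?thesis using row[of i] i by (intro mult_left_mono) auto
        qed
      qed
      also have "(\<Sum>i<n. y i * (-k - dd i)) = - (k * S y) - Bm n Q y v"
        by (simp add: Bv S_def algebra_simps sum_subtractf sum_distrib_left sum_negf)
      finally have "Bm n Q y y \<le> - (k * S y) - Bm n Q y v" .
      moreover have "Bm n Q y y = 2 * (-k) - 2 * Bm n Q y v"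
        using Bm_diag[of n Q y] by (simp add: k_def g_def)
      ultimately show ?thesis by simp
    qed
    define p where "p = (\<lambda>i. if i = a \<or> i = b then y i else 0)"
    define r where "r = (\<lambda>i. if i = a \<or> i = b then 0 else y i)"
    have ypr: "y = (\<lambda>i. p i + r i)" by (auto simp: p_def r_def)
    have pnn: "\<forall>i<n. 0 \<le> p i" using ynn by (simp add: p_def)
    have rnn: "\<forall>i<n. 0 \<le> r i" using ynn by (simp add: r_def)
    have Brv: "Bm n Q r v = 0" unfolding Bv using dz by (intro sum.neutral) (auto simp: r_def)
    have m_eq: "Bm n Q y v = Bm n Q p v" by (subst ypr, simp add: Bm_add1 Brv)
    have Sy_eq: "S y = S p + S r" by (subst ypr, simp add: S_def sum.distrib)
    have g_eq: "g y = g p + g r + Bm n Q p r" by (subst ypr, rule gadd)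
    have gr: "g r = unit_form n Q r" using Brv by (simp add: g_def)
    have gp: "g p = unit_form n Q p + Bm n Q p v" by (simp add: g_def)
    have key: "4 * unit_form n Q p \<ge> (Bm n Q p v)^2"
    proof (cases "a = b")
      case True
      then have pe: "p = (\<lambda>i. y a * unit_vec a i)" by (auto simp: p_def unit_vec_def)
      have up: "unit_form n Q p = (y a)^2" unfolding pe uf_smult uf_unit[OF ab(1)] by simp
      have mp: "Bm n Q p v = y a * dd a" unfolding pe Bm_smult1 Bunitv[OF ab(1)] ..
      have d2: "dd a \<le> 2" "dd a \<ge> 0" using dab True ddnn ab by auto
      have "(dd a)^2 \<le> 2^2" using d2 by (intro power_mono) auto
      then have "(y a)^2 * (dd a)^2 \<le> (y a)^2 * 4" by (intro mult_left_mono) auto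
      then show ?thesis using up mp by (simp add: power_mult_distrib algebra_simps)
    next
      case False
      then have dd1: "dd a = 1" "dd b = 1" using dab by auto
      have pe: "p = (\<lambda>i. y a * unit_vec a i + y b * unit_vec b i)"
        using False by (intro ext) (auto simp: p_def unit_vec_def)
      have up: "unit_form n Q p = (y a)^2 + (y b)^2 + y a * y b * AA Q a b"
        unfolding pe uf_add uf_smult uf_unit[OF ab(1)] uf_unit[OF ab(2)] Bm_smult1 Bm_smult2 Bm_unit_unit[OF ab]
        by (simp add: algebra_simps)
      have mp: "Bm n Q p v = y a + y b"
        unfolding pe Bm_add1 Bm_smult1 Bunitv[OF ab(1)] Bunitv[OF ab(2)] using dd1 by simp
      have A1: "AA Q a b \<ge> -1" using slender_AA[OF sl ab] .
      have yab: "y a \<ge> 0" "y b \<ge> 0" using ynn ab by auto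
      then have "y a * y b * (-1) \<le> y a * y b * AA Q a b" using A1 by (intro mult_left_mono) auto
      moreover have "0 \<le> (y a - y b)^2" by simp
      ultimately show ?thesis using up mp by (simp add: power2_eq_square algebra_simps)
    qed
    have up0: "unit_form n Q p \<ge> 0"
    proof -
      have "(Bm n Q p v)^2 \<ge> 0" by simp
      then show ?thesis using key by linarith
    qed
    show False
    proof (cases "S r = 0")
      case True
      then have r0: "\<forall>i<n. r i = 0" using S0 rnn by blast
      have "unit_form n Q r = 0" using uf_cong[of n r "\<lambda>_. 0"] r0 uf_zero by simp
      moreover have "Bm n Q p r = 0" using Bm_cong[of n p p r "\<lambda>_. 0" Q] r0 Bm_zero1 Bm_sym by metis
      ultimately have "g y = unit_form n Q p + Bm n Q p v" using g_eq gr gp by simp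
      then have "g y \<ge> 0" using up0 m0 m_eq by simp
      then show False using k1 by (simp add: k_def)
    next
      case Sr: False
      then have Srpos: "S r > 0" using Snn[OF rnn] by simp
      show False
      proof (cases "S p = 0")
        case True
        then have p0: "\<forall>i<n. p i = 0" using S0 pnn by blast
        have "Bm n Q p v = 0" using Bm_cong[of n p "\<lambda>_. 0" v v Q] p0 Bm_zero1 by simp
        then have "k * S y \<le> k * 2" using kS m_eq by simp
        then have "S y \<le> 2" using k1 by simp
        then show False using Sy3 by simp
      next
        case False
        then have Sppos: "S p > 0" using Snn[OF pnn] by simp
        have grr: "g r \<ge> 1" using gmin[OF rnn Srpos] Sy_eq Sppos by simp
        have Bpr: "Bm n Q p r \<ge> - (S p * S r)" using Bm_lower2[OF sl pnn rnn] by (simp add: S_def)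
        define m where "m = Bm n Q p v"
        have m0': "m \<ge> 0" using m0 m_eq by (simp add: m_def)
        have h0: "0 \<le> (k - 1) * (S p + S r - 2)" using k1 Sy3 Sy_eq by (intro mult_nonneg_nonneg) auto
        have h1: "S p + S r \<le> 2 + m" using h0 kS m_eq Sy_eq by (simp add: m_def algebra_simps)
        have h2: "S p * S r \<le> S p * (2 + m - S p)" using h1 Sppos by (intro mult_left_mono) auto
        have eq: "(2 * S p - m - 2)^2 = m^2 + 4 * m + 4 - 4 * (S p * (2 + m - S p))"
          by (simp add: power2_eq_square algebra_simps)
        have sq: "(2 * S p - m - 2)^2 \<ge> 0" by simp
        have "- k = unit_form n Q p + m + g r + Bm n Q p r" using g_eq gp by (simp add: k_def m_def)
        then show False using grr Bpr h2 eq sq key k1 by (simp add: m_def)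
      qed
    qed
  qed
qed

end
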